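(* Let $n\in\mathbb{N}$, $K>0$, $\alpha,\beta,\kappa,a,c\in\mathbb{R}$, and let $H$ be a symmetric $n\times n$ real matrix with $-KI\preceq H\preceq KI$. Consider the symmetric $2n\times2n$ matrix $$A=\begin{pmatrix}\alpha I&\beta I+aH\\\beta I+aH&\kappa I+cH\end{pmatrix}.$$ If $-cK-\alpha-\kappa\le0$ in the case $c\le0$ (respectively $cK-\alpha-\kappa\le0$ in the case $c>0$), and $$a^2K^2-(c\alpha-2\beta a)K-\alpha\kappa+\beta^2\le0,\qquad a^2K^2+(c\alpha-2\beta a)K-\alpha\kappa+\beta^2\le0,$$ then $A$ is positive semidefinite.
   Context: $I$ denotes the $n\times n$ identity matrix and $\preceq$ the Loewner order on symmetric matrices. *)

theory Defs
  imports "Jordan_Normal_Form.Matrix"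
begin

definition psd :: "real mat \<Rightarrow> bool" where
  "psd M \<longleftrightarrow> M \<in> carrier_mat (dim_row M) (dim_row M) \<and> M\<^sup>T = M \<and>
     (\<forall>x \<in> carrier_vec (dim_row M). 0 \<le> x \<bullet> (M *\<^sub>v x))"

definition loewner_le :: "real mat \<Rightarrow> real mat \<Rightarrow> bool" where
  "loewner_le A B \<longleftrightarrow> dim_row A = dim_row B \<and> dim_col A = dim_col B \<and> psd (B - A)"

end

theory Submission
  imports Defs
begin

lemma quad_aux:
  fixes p q r X Y Z :: real
  assumes "p \<ge> 0" "r \<ge> 0" "q\<^sup>2 \<le> p * r"
    and F: "\<And>s t. s\<^sup>2 * X + 2 * s * t * Y + t\<^sup>2 * Z \<ge> 0"
  shows "p * X + 2 * q * Y + r * Z \<ge> 0"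
proof (cases "p = 0")
  case True
  then have "q\<^sup>2 \<le> 0" using assms by simp
  then have "q = 0" by (metis power2_less_eq_zero_iff)
  moreover have "Z \<ge> 0" using F[of 0 1] by simp
  ultimately show ?thesis using True assms by simp
next
  case False
  then have pp: "p > 0" using assms by simp
  have Z: "Z \<ge> 0" using F[of 0 1] by simp
  have "p\<^sup>2 * X + 2 * p * q * Y + q\<^sup>2 * Z \<ge> 0" using F[of p q] by simp
  moreover have "q\<^sup>2 * Z \<le> p * r * Z" using Z assms by (simp add: mult_right_mono)
  ultimately have "p * (p * X + 2 * q * Y + r * Z) \<ge> 0"
    by (simp add: power2_eq_square algebra_simps)
  then show ?thesis using pp by (simp add: zero_le_mult_iff)
qed

lemma smult_mat_mult_vec:
  fixes A :: "real mat"
  assumes "A \<in> carrier_mat n n" "w \<in> carrier_vec n"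
  shows "(k \<cdot>\<^sub>m A) *\<^sub>v w = k \<cdot>\<^sub>v (A *\<^sub>v w)"
  using assms by (intro eq_vecI) (auto simp: scalar_prod_def sum_distrib_left ac_simps)

lemma comb_mult_vec:
  fixes H :: "real mat"
  assumes H: "H \<in> carrier_mat n n" and w: "w \<in> carrier_vec n"
  shows "(p \<cdot>\<^sub>m 1\<^sub>m n + q \<cdot>\<^sub>m H) *\<^sub>v w = p \<cdot>\<^sub>v w + q \<cdot>\<^sub>v (H *\<^sub>v w)"
proof -
  have "(p \<cdot>\<^sub>m 1\<^sub>m n + q \<cdot>\<^sub>m H) *\<^sub>v w = (p \<cdot>\<^sub>m 1\<^sub>m n) *\<^sub>v w + (q \<cdot>\<^sub>m H) *\<^sub>v w"
    using H w by (intro add_mult_distrib_mat_vec) auto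
  also have "\<dots> = p \<cdot>\<^sub>v w + q \<cdot>\<^sub>v (H *\<^sub>v w)"
    using H w by (simp add: smult_mat_mult_vec[of _ n])
  finally show ?thesis .
qed

lemma comb_form:
  fixes H :: "real mat"
  assumes H: "H \<in> carrier_mat n n" and u: "u \<in> carrier_vec n" and w: "w \<in> carrier_vec n"
  shows "u \<bullet> ((p \<cdot>\<^sub>m 1\<^sub>m n + q \<cdot>\<^sub>m H) *\<^sub>v w) = p * (u \<bullet> w) + q * (u \<bullet> (H *\<^sub>v w))"
  using assms by (simp add: comb_mult_vec scalar_prod_add_distrib[of _ n])

lemma sym_form:
  fixes H :: "real mat"
  assumes H: "H \<in> carrier_mat n n" "H\<^sup>T = H" and u: "u \<in> carrier_vec n" and v: "v \<in> carrier_vec n"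
  shows "v \<bullet> (H *\<^sub>v u) = u \<bullet> (H *\<^sub>v v)"
proof -
  have "v \<bullet> (H *\<^sub>v u) = (H\<^sup>T *\<^sub>v v) \<bullet> u"
    using transpose_vec_mult_scalar[OF H(1) u v] by simp
  also have "\<dots> = (H *\<^sub>v v) \<bullet> u" using H by simp
  also have "\<dots> = u \<bullet> (H *\<^sub>v v)" using H u v by (intro comm_scalar_prod[of _ n]) auto
  finally show ?thesis .
qed

lemma bilin_expand:
  fixes H :: "real mat"
  assumes H: "H \<in> carrier_mat n n" "H\<^sup>T = H" and u: "u \<in> carrier_vec n" and v: "v \<in> carrier_vec n"
  shows "(s \<cdot>\<^sub>v u + t \<cdot>\<^sub>v v) \<bullet> (H *\<^sub>v (s \<cdot>\<^sub>v u + t \<cdot>\<^sub>v v))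
     = s\<^sup>2 * (u \<bullet> (H *\<^sub>v u)) + 2 * s * t * (u \<bullet> (H *\<^sub>v v)) + t\<^sup>2 * (v \<bullet> (H *\<^sub>v v))"
proof -
  have Hw: "H *\<^sub>v (s \<cdot>\<^sub>v u + t \<cdot>\<^sub>v v) = s \<cdot>\<^sub>v (H *\<^sub>v u) + t \<cdot>\<^sub>v (H *\<^sub>v v)"
    using H u v by (simp add: mult_add_distrib_mat_vec[of _ n n] mult_mat_vec[of _ n n])
  have "(s \<cdot>\<^sub>v u + t \<cdot>\<^sub>v v) \<bullet> (s \<cdot>\<^sub>v (H *\<^sub>v u) + t \<cdot>\<^sub>v (H *\<^sub>v v))
     = s * s * (u \<bullet> (H *\<^sub>v u)) + s * t * (u \<bullet> (H *\<^sub>v v)) + t * s * (v \<bullet> (H *\<^sub>v u)) + t * t * (v \<bullet> (H *\<^sub>v v))"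
    using H u v by (simp add: add_scalar_prod_distrib[of _ n] scalar_prod_add_distrib[of _ n] algebra_simps)
  also have "\<dots> = s\<^sup>2 * (u \<bullet> (H *\<^sub>v u)) + 2 * s * t * (u \<bullet> (H *\<^sub>v v)) + t\<^sup>2 * (v \<bullet> (H *\<^sub>v v))"
    using sym_form[OF H u v] by (simp add: power2_eq_square algebra_simps)
  finally show ?thesis using Hw by simp
qed

lemma one_expand:
  fixes u v :: "real vec"
  assumes u: "u \<in> carrier_vec n" and v: "v \<in> carrier_vec n"
  shows "(s \<cdot>\<^sub>v u + t \<cdot>\<^sub>v v) \<bullet> (s \<cdot>\<^sub>v u + t \<cdot>\<^sub>v v)
     = s\<^sup>2 * (u \<bullet> u) + 2 * s * t * (u \<bullet> v) + t\<^sup>2 * (v \<bullet> v)"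
proof -
  have "v \<bullet> u = u \<bullet> v" using u v by (intro comm_scalar_prod[of _ n]) auto
  then show ?thesis using u v
    by (simp add: add_scalar_prod_distrib[of _ n] scalar_prod_add_distrib[of _ n]
        power2_eq_square algebra_simps)
qed

theorem propositionF18:
  fixes n :: nat and K \<alpha> \<beta> \<kappa> a c :: real and H :: "real mat"
  assumes "K > 0"
    and "H \<in> carrier_mat n n" and "H\<^sup>T = H"
    and "loewner_le ((- K) \<cdot>\<^sub>m 1\<^sub>m n) H" and "loewner_le H (K \<cdot>\<^sub>m 1\<^sub>m n)"
    and "if c \<le> 0 then - c * K - \<alpha> - \<kappa> \<le> 0 else c * K - \<alpha> - \<kappa> \<le> 0"
    and "a\<^sup>2 * K\<^sup>2 - (c * \<alpha> - 2 * \<beta> * a) * K - \<alpha> * \<kappa> + \<beta>\<^sup>2 \<le> 0"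
    and "a\<^sup>2 * K\<^sup>2 + (c * \<alpha> - 2 * \<beta> * a) * K - \<alpha> * \<kappa> + \<beta>\<^sup>2 \<le> 0"
  shows "psd (four_block_mat (\<alpha> \<cdot>\<^sub>m 1\<^sub>m n) (\<beta> \<cdot>\<^sub>m 1\<^sub>m n + a \<cdot>\<^sub>m H)
                             (\<beta> \<cdot>\<^sub>m 1\<^sub>m n + a \<cdot>\<^sub>m H) (\<kappa> \<cdot>\<^sub>m 1\<^sub>m n + c \<cdot>\<^sub>m H))"
proof -
  note H = assms(2,3)
  let ?A = "\<alpha> \<cdot>\<^sub>m 1\<^sub>m n" let ?B = "\<beta> \<cdot>\<^sub>m 1\<^sub>m n + a \<cdot>\<^sub>m H" let ?D = "\<kappa> \<cdot>\<^sub>m 1\<^sub>m n + c \<cdot>\<^sub>m H"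
  let ?M = "four_block_mat ?A ?B ?B ?D"
  have A0: "?A = \<alpha> \<cdot>\<^sub>m 1\<^sub>m n + 0 \<cdot>\<^sub>m H" using H by auto
  have cA: "?A \<in> carrier_mat n n" and cB: "?B \<in> carrier_mat n n" and cD: "?D \<in> carrier_mat n n"
    using H by auto
  have cM: "?M \<in> carrier_mat (n+n) (n+n)" using four_block_carrier_mat[OF cA cD] .
  have dimM: "dim_row ?M = n + n" using cM by auto
  have P1: "K * (w \<bullet> w) + w \<bullet> (H *\<^sub>v w) \<ge> 0" if w: "w \<in> carrier_vec n" for w
  proof -
    have "psd (H - (- K) \<cdot>\<^sub>m 1\<^sub>m n)" using assms(4) unfolding loewner_le_def by auto
    then have "0 \<le> w \<bullet> ((H - (- K) \<cdot>\<^sub>m 1\<^sub>m n) *\<^sub>v w)" using w H unfolding psd_def by auto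
    also have "(H - (- K) \<cdot>\<^sub>m 1\<^sub>m n) *\<^sub>v w = H *\<^sub>v w - ((- K) \<cdot>\<^sub>m 1\<^sub>m n) *\<^sub>v w"
      using H w by (intro minus_mult_distrib_mat_vec) auto
    also have "((- K) \<cdot>\<^sub>m 1\<^sub>m n) *\<^sub>v w = (- K) \<cdot>\<^sub>v w" using w by (simp add: smult_mat_mult_vec[of _ n])
    finally show ?thesis using w H by (simp add: scalar_prod_minus_distrib[of _ n])
  qed
  have P2: "K * (w \<bullet> w) - w \<bullet> (H *\<^sub>v w) \<ge> 0" if w: "w \<in> carrier_vec n" for w
  proof -
    have "psd (K \<cdot>\<^sub>m 1\<^sub>m n - H)" using assms(5) unfolding loewner_le_def by auto
    then have "0 \<le> w \<bullet> ((K \<cdot>\<^sub>m 1\<^sub>m n - H) *\<^sub>v w)" using w H unfolding psd_def by auto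
    also have "(K \<cdot>\<^sub>m 1\<^sub>m n - H) *\<^sub>v w = (K \<cdot>\<^sub>m 1\<^sub>m n) *\<^sub>v w - H *\<^sub>v w"
      using H w by (intro minus_mult_distrib_mat_vec) auto
    also have "(K \<cdot>\<^sub>m 1\<^sub>m n) *\<^sub>v w = K \<cdot>\<^sub>v w" using w by (simp add: smult_mat_mult_vec[of _ n])
    finally show ?thesis using w H by (simp add: scalar_prod_minus_distrib[of _ n])
  qed
  have form: "0 \<le> x \<bullet> (?M *\<^sub>v x)" if x: "x \<in> carrier_vec (n + n)" for x
  proof -
    define u where "u = vec_first x n"
    define v where "v = vec_last x n"
    have u: "u \<in> carrier_vec n" and v: "v \<in> carrier_vec n" unfolding u_def v_def by auto
    have xuv: "x = u @\<^sub>v v" unfolding u_def v_def using x by simp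
    have mv: "?M *\<^sub>v x = (?A *\<^sub>v u + ?B *\<^sub>v v) @\<^sub>v (?B *\<^sub>v u + ?D *\<^sub>v v)"
      unfolding xuv by (rule four_block_mat_mult_vec[OF cA cB cB cD u v])
    have "x \<bullet> (?M *\<^sub>v x) = (u @\<^sub>v v) \<bullet> ((?A *\<^sub>v u + ?B *\<^sub>v v) @\<^sub>v (?B *\<^sub>v u + ?D *\<^sub>v v))"
      using mv xuv by simp
    also have "\<dots> = u \<bullet> (?A *\<^sub>v u + ?B *\<^sub>v v) + v \<bullet> (?B *\<^sub>v u + ?D *\<^sub>v v)"
      using u v cA cB cD by (intro scalar_prod_append[of _ n _ n]) (auto intro!: add_carrier_vec mult_mat_vec_carrier)
    also have "\<dots> = u \<bullet> (?A *\<^sub>v u) + u \<bullet> (?B *\<^sub>v v) + v \<bullet> (?B *\<^sub>v u) + v \<bullet> (?D *\<^sub>v v)"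
    proof -
      have c1: "?A *\<^sub>v u \<in> carrier_vec n" "?B *\<^sub>v v \<in> carrier_vec n"
        "?B *\<^sub>v u \<in> carrier_vec n" "?D *\<^sub>v v \<in> carrier_vec n"
        using u v cA cB cD by (meson mult_mat_vec_carrier)+
      show ?thesis using u v c1 by (simp add: scalar_prod_add_distrib[of _ n])
    qed
    also have "\<dots> = \<alpha> * (u \<bullet> u) + (\<beta> * (u \<bullet> v) + a * (u \<bullet> (H *\<^sub>v v)))
        + (\<beta> * (v \<bullet> u) + a * (v \<bullet> (H *\<^sub>v u))) + (\<kappa> * (v \<bullet> v) + c * (v \<bullet> (H *\<^sub>v v)))"
      apply (subst A0)
      using u v H by (simp only: comb_form[OF H(1)])
    also have "\<dots> = \<alpha> * (u \<bullet> u) + 2 * \<beta> * (u \<bullet> v) + 2 * a * (u \<bullet> (H *\<^sub>v v))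
        + \<kappa> * (v \<bullet> v) + c * (v \<bullet> (H *\<^sub>v v))"
      using sym_form[OF H u v] comm_scalar_prod[OF v u] by simp
    finally have eq: "x \<bullet> (?M *\<^sub>v x) = \<alpha> * (u \<bullet> u) + 2 * \<beta> * (u \<bullet> v) + 2 * a * (u \<bullet> (H *\<^sub>v v))
        + \<kappa> * (v \<bullet> v) + c * (v \<bullet> (H *\<^sub>v v))" .
    define UU where "UU = u \<bullet> u" define UV where "UV = u \<bullet> v" define VV where "VV = v \<bullet> v"
    define HU where "HU = u \<bullet> (H *\<^sub>v u)" define HUV where "HUV = u \<bullet> (H *\<^sub>v v)"
    define HV where "HV = v \<bullet> (H *\<^sub>v v)"
    have F1: "s\<^sup>2 * (K * UU - HU) + 2 * s * t * (K * UV - HUV) + t\<^sup>2 * (K * VV - HV) \<ge> 0" for s t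
    proof -
      have w: "s \<cdot>\<^sub>v u + t \<cdot>\<^sub>v v \<in> carrier_vec n" using u v by auto
      show ?thesis using P2[OF w] unfolding one_expand[OF u v] bilin_expand[OF H u v]
        UU_def UV_def VV_def HU_def HUV_def HV_def by (simp add: algebra_simps)
    qed
    have F2: "s\<^sup>2 * (K * UU + HU) + 2 * s * t * (K * UV + HUV) + t\<^sup>2 * (K * VV + HV) \<ge> 0" for s t
    proof -
      have w: "s \<cdot>\<^sub>v u + t \<cdot>\<^sub>v v \<in> carrier_vec n" using u v by auto
      show ?thesis using P1[OF w] unfolding one_expand[OF u v] bilin_expand[OF H u v]
        UU_def UV_def VV_def HU_def HUV_def HV_def by (simp add: algebra_simps)
    qed
    have K: "K > 0" by (rule assms(1))
    have tr1: "\<alpha> + (\<kappa> - c * K) \<ge> 0" and tr2: "\<alpha> + (\<kappa> + c * K) \<ge> 0"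
      using assms(6) K by (auto split: if_splits simp: mult_nonneg_nonneg mult_nonpos_nonneg)
        (smt (verit) mult_nonneg_nonneg mult_nonpos_nonneg)+
    have det1: "(\<beta> - a * K)\<^sup>2 \<le> \<alpha> * (\<kappa> - c * K)" using assms(8)
      by (simp add: power2_eq_square algebra_simps)
    have det2: "(\<beta> + a * K)\<^sup>2 \<le> \<alpha> * (\<kappa> + c * K)" using assms(7)
      by (simp add: power2_eq_square algebra_simps)
    have pos: "p \<ge> 0 \<and> r \<ge> 0" if "p + r \<ge> 0" "q\<^sup>2 \<le> p * r" for p q r :: real
    proof -
      have "p * r \<ge> 0" using that(2) by (smt (verit) zero_le_power2)
      then show ?thesis using that(1) by (smt (verit) mult_neg_pos mult_pos_neg zero_le_mult_iff)
    qed
    have G1: "\<alpha> * (K * UU - HU) + 2 * (\<beta> - a * K) * (K * UV - HUV) + (\<kappa> - c * K) * (K * VV - HV) \<ge> 0"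
      using pos[OF tr1 det1] det1 by (intro quad_aux F1) auto
    have G2: "\<alpha> * (K * UU + HU) + 2 * (\<beta> + a * K) * (K * UV + HUV) + (\<kappa> + c * K) * (K * VV + HV) \<ge> 0"
      using pos[OF tr2 det2] det2 by (intro quad_aux F2) auto
    have "2 * K * (\<alpha> * UU + 2 * \<beta> * UV + 2 * a * HUV + \<kappa> * VV + c * HV) =
      (\<alpha> * (K * UU - HU) + 2 * (\<beta> - a * K) * (K * UV - HUV) + (\<kappa> - c * K) * (K * VV - HV))
      + (\<alpha> * (K * UU + HU) + 2 * (\<beta> + a * K) * (K * UV + HUV) + (\<kappa> + c * K) * (K * VV + HV))"
      by (simp add: algebra_simps)
    then have "2 * K * (\<alpha> * UU + 2 * \<beta> * UV + 2 * a * HUV + \<kappa> * VV + c * HV) \<ge> 0"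
      using G1 G2 by simp
    then have "\<alpha> * UU + 2 * \<beta> * UV + 2 * a * HUV + \<kappa> * VV + c * HV \<ge> 0"
      using K by (simp add: zero_le_mult_iff)
    then show ?thesis unfolding eq UU_def UV_def VV_def HUV_def HV_def .
  qed
  have hsym: "H $$ (i, j) = H $$ (j, i)" if "i < n" "j < n" for i j
  proof -
    have "H\<^sup>T $$ (i, j) = H $$ (j, i)" using H(1) that by (intro index_transpose_mat) auto
    then show ?thesis using H(2) by simp
  qed
  have symM: "?M\<^sup>T = ?M"
    using H cA cB cD hsym by (subst transpose_four_block_mat[OF cA cB cB cD]) (auto intro!: eq_matI)
  show ?thesis unfolding psd_def using cM symM form dimM by auto
qed

end
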